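(* For any valid packing $p$ of a finite multiset of items into a finite sequence of bins, there is a thrifty packing of those items into that sequence that uses a subset of the bins used by $p$.
   Context: Grid Scheduling setting: items have positive integer sizes; bins have positive integer sizes and form a sequence. A partial packing assigns some items to bins such that the total size of the items in each bin is at most the bin's size; a packing assigns every item. A bin is used if it receives at least one item. A (partial) packing is valid if each empty bin is smaller than every unpacked item and smaller than every item packed in a later bin. A bin in a (partial) packing is wasteful if its empty space (size minus total size of its items) is at least as large as the size of some unpacked item or of some item packed in a later bin. A (partial) packing is thrifty if it has no wasteful bin. *)

theory Defs
  imports Main
begin

text \<open>Items are given by a list xs of item sizes (the list represents the finite
multiset of items; item i has size xs ! i).  A partial packing is a map
a :: nat => nat option: a i = Some j means item i is put into bin j,
a i = None means item i is unpacked.\<close>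

definition load :: "nat list \<Rightarrow> (nat \<Rightarrow> nat option) \<Rightarrow> nat \<Rightarrow> nat" where
  "load xs a j = (\<Sum>i\<in>{i. i < length xs \<and> a i = Some j}. xs ! i)"

definition partial_packing :: "nat list \<Rightarrow> nat list \<Rightarrow> (nat \<Rightarrow> nat option) \<Rightarrow> bool" where
  "partial_packing xs bs a \<longleftrightarrow>
     (\<forall>i<length xs. \<forall>j. a i = Some j \<longrightarrow> j < length bs) \<and>
     (\<forall>j<length bs. load xs a j \<le> bs ! j)"

definition packing :: "nat list \<Rightarrow> nat list \<Rightarrow> (nat \<Rightarrow> nat option) \<Rightarrow> bool" where
  "packing xs bs a \<longleftrightarrow> partial_packing xs bs a \<and> (\<forall>i<length xs. a i \<noteq> None)"

definition used_bins :: "nat list \<Rightarrow> nat list \<Rightarrow> (nat \<Rightarrow> nat option) \<Rightarrow> nat set" where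
  "used_bins xs bs a = {j. j < length bs \<and> (\<exists>i<length xs. a i = Some j)}"

definition later_or_unpacked :: "(nat \<Rightarrow> nat option) \<Rightarrow> nat \<Rightarrow> nat \<Rightarrow> bool" where
  "later_or_unpacked a j i \<longleftrightarrow> a i = None \<or> (\<exists>k. a i = Some k \<and> j < k)"

definition valid :: "nat list \<Rightarrow> nat list \<Rightarrow> (nat \<Rightarrow> nat option) \<Rightarrow> bool" where
  "valid xs bs a \<longleftrightarrow>
     (\<forall>j<length bs. j \<notin> used_bins xs bs a \<longrightarrow>
        (\<forall>i<length xs. later_or_unpacked a j i \<longrightarrow> bs ! j < xs ! i))"

definition wasteful :: "nat list \<Rightarrow> nat list \<Rightarrow> (nat \<Rightarrow> nat option) \<Rightarrow> nat \<Rightarrow> bool" where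
  "wasteful xs bs a j \<longleftrightarrow>
     (\<exists>i<length xs. later_or_unpacked a j i \<and> xs ! i \<le> bs ! j - load xs a j)"

definition thrifty :: "nat list \<Rightarrow> nat list \<Rightarrow> (nat \<Rightarrow> nat option) \<Rightarrow> bool" where
  "thrifty xs bs a \<longleftrightarrow> (\<forall>j<length bs. \<not> wasteful xs bs a j)"

end

theory Submission
  imports Defs
begin

definition inv_q :: "nat list \<Rightarrow> nat list \<Rightarrow> nat set \<Rightarrow> (nat \<Rightarrow> nat option) \<Rightarrow> bool" where
  "inv_q xs bs U q \<longleftrightarrow> packing xs bs q \<and> used_bins xs bs q \<subseteq> U \<and>
     (\<forall>j<length bs. j \<notin> U \<longrightarrow> (\<forall>i<length xs. later_or_unpacked q j i \<longrightarrow> bs ! j < xs ! i))"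

definition meas :: "nat list \<Rightarrow> (nat \<Rightarrow> nat option) \<Rightarrow> nat" where
  "meas xs q = (\<Sum>i<length xs. the (q i))"

lemma load_upd_same:
  assumes "i < length xs" "q i \<noteq> Some j"
  shows "load xs (q(i := Some j)) j = load xs q j + xs ! i"
proof -
  have "{i'. i' < length xs \<and> (q(i := Some j)) i' = Some j} = insert i {i'. i' < length xs \<and> q i' = Some j}"
    using assms by auto
  moreover have "i \<notin> {i'. i' < length xs \<and> q i' = Some j}" using assms by auto
  ultimately show ?thesis unfolding load_def by simp
qed

lemma load_upd_other:
  assumes "j' \<noteq> j"
  shows "load xs (q(i := Some j)) j' \<le> load xs q j'"
proof -
  have "{i'. i' < length xs \<and> (q(i := Some j)) i' = Some j'} \<subseteq> {i'. i' < length xs \<and> q i' = Some j'}"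
    using assms by auto
  then show ?thesis unfolding load_def by (intro sum_mono2) auto
qed

lemma step:
  assumes "inv_q xs bs U q" "\<not> thrifty xs bs q"
  shows "\<exists>q'. inv_q xs bs U q' \<and> meas xs q' < meas xs q"
proof -
  from assms(2) obtain j i where j: "j < length bs" and i: "i < length xs"
    and lat: "later_or_unpacked q j i" and fit: "xs ! i \<le> bs ! j - load xs q j"
    unfolding thrifty_def wasteful_def by auto
  have pk: "packing xs bs q" and ub: "used_bins xs bs q \<subseteq> U"
    and iv: "\<forall>j<length bs. j \<notin> U \<longrightarrow> (\<forall>i<length xs. later_or_unpacked q j i \<longrightarrow> bs ! j < xs ! i)"
    using assms(1) unfolding inv_q_def by auto
  obtain k where k: "q i = Some k" "j < k"
    using lat pk i unfolding later_or_unpacked_def packing_def by auto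
  have jU: "j \<in> U"
  proof (rule ccontr)
    assume "j \<notin> U"
    then have "bs ! j < xs ! i" using iv j i lat by auto
    moreover have "j \<notin> used_bins xs bs q" using \<open>j \<notin> U\<close> ub by auto
    then have "load xs q j = 0" unfolding load_def used_bins_def using j
      by (auto intro!: sum.neutral)
    ultimately show False using fit by simp
  qed
  define q' where "q' = q(i := Some j)"
  have lj: "load xs q j \<le> bs ! j" using pk j unfolding packing_def partial_packing_def by auto
  have pp: "partial_packing xs bs q'"
    unfolding partial_packing_def
  proof (intro conjI allI impI)
    fix i' j' assume "i' < length xs" "q' i' = Some j'"
    then show "j' < length bs" using pk j unfolding q'_def packing_def partial_packing_def
      by (auto split: if_splits)
  next
    fix j' assume j': "j' < length bs"
    show "load xs q' j' \<le> bs ! j'"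
    proof (cases "j' = j")
      case True
      then show ?thesis using load_upd_same[of i xs q j] i k fit lj unfolding q'_def by auto
    next
      case False
      then show ?thesis using load_upd_other[of j' j xs q i] pk j'
        unfolding q'_def packing_def partial_packing_def by fastforce
    qed
  qed
  have pk': "packing xs bs q'" using pp pk unfolding packing_def q'_def by auto
  have ub': "used_bins xs bs q' \<subseteq> U"
    using ub jU unfolding used_bins_def q'_def by (auto split: if_splits)
  have lat': "later_or_unpacked q j0 i'" if "later_or_unpacked q' j0 i'" for j0 i'
    using that k unfolding later_or_unpacked_def q'_def by (auto split: if_splits)
  have iv': "\<forall>j<length bs. j \<notin> U \<longrightarrow> (\<forall>i<length xs. later_or_unpacked q' j i \<longrightarrow> bs ! j < xs ! i)"
    using iv lat' by blast
  have "meas xs q' < meas xs q"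
    unfolding meas_def
  proof (rule sum_strict_mono_ex1)
    show "\<forall>x\<in>{..<length xs}. the (q' x) \<le> the (q x)" using k unfolding q'_def by auto
    show "\<exists>a\<in>{..<length xs}. the (q' a) < the (q a)" using k i unfolding q'_def by (intro bexI[of _ i]) auto
  qed simp
  then show ?thesis using pk' ub' iv' unfolding inv_q_def by blast
qed

lemma main:
  "inv_q xs bs U q \<Longrightarrow> \<exists>q'. packing xs bs q' \<and> thrifty xs bs q' \<and> used_bins xs bs q' \<subseteq> U"
proof (induction "meas xs q" arbitrary: q rule: less_induct)
  case less
  show ?case
  proof (cases "thrifty xs bs q")
    case True
    then show ?thesis using less.prems unfolding inv_q_def by blast
  next
    case False
    then obtain q' where "inv_q xs bs U q'" "meas xs q' < meas xs q"
      using step less.prems by blast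
    then show ?thesis using less.hyps by blast
  qed
qed

theorem lemma2:
  fixes xs bs :: "nat list" and p :: "nat \<Rightarrow> nat option"
  assumes "\<forall>x\<in>set xs. 0 < x"
    and "\<forall>b\<in>set bs. 0 < b"
    and "packing xs bs p"
    and "valid xs bs p"
  shows "\<exists>q. packing xs bs q \<and> thrifty xs bs q \<and> used_bins xs bs q \<subseteq> used_bins xs bs p"
proof -
  have "inv_q xs bs (used_bins xs bs p) p"
    using assms(3,4) unfolding inv_q_def valid_def by auto
  then show ?thesis by (rule main)
qed

end
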